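(* Let $Z\sim N(0,1)$ and $X=H_3(Z)=Z^3-3Z$. Let $f$ be five times differentiable on $\mathbb{R}$, and suppose $\mathbb{E}|X^2f^{(i)}(X)|<\infty$ for $i=3,5$, $\mathbb{E}|Xf^{(j)}(X)|<\infty$ for $j=0,2,4$, and $\mathbb{E}|f^{(k)}(X)|<\infty$ for $k=1,3,5$. Then $$\mathbb{E}\big[486(4-X^2)f^{(5)}(X)-486Xf^{(4)}(X)-27(8-X^2)f^{(3)}(X)+99Xf''(X)+6f'(X)-Xf(X)\big]=0.$$
   Context: $f^{(0)}\equiv f$, and $f^{(k)}$ denotes the $k$-th derivative of $f$. $H_3(x)=x^3-3x$ is the third Hermite polynomial. *)

theory Defs
  imports "HOL-Probability.Probability"
begin

definition kderiv :: "nat \<Rightarrow> (real \<Rightarrow> real) \<Rightarrow> real \<Rightarrow> real" where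
  "kderiv k f = (deriv ^^ k) f"

definition H3 :: "real \<Rightarrow> real" where
  "H3 x = x ^ 3 - 3 * x"

end

theory Submission
  imports Defs
begin

lemma phi_deriv: "(std_normal_density has_real_derivative (- x * std_normal_density x)) (at x)"
  unfolding std_normal_density_def
  by (auto intro!: derivative_eq_intros simp: field_simps)

lemma phi_even: "std_normal_density (-x) = std_normal_density x"
  unfolding std_normal_density_def by simp

lemma H3_deriv: "(H3 has_real_derivative (3*x^2 - 3)) (at x)"
  unfolding H3_def[abs_def]
  by (auto intro!: derivative_eq_intros)

lemma H3_neg: "H3 (-x) = - H3 x"
  unfolding H3_def by (simp add: algebra_simps)

lemma H3_bounds:
  fixes z :: real assumes "2 \<le> \<bar>z\<bar>"
  shows "\<bar>z\<bar> ^ 3 \<le> 4 * \<bar>H3 z\<bar>" "\<bar>z\<bar> \<le> \<bar>H3 z\<bar>" "z\<^sup>2 \<le> 2 * \<bar>H3 z\<bar>" "1 \<le> \<bar>H3 z\<bar>" "1 / \<bar>z\<bar> \<le> 1/2"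
proof -
  have a: "\<bar>H3 z\<bar> = \<bar>z\<bar> * \<bar>z\<^sup>2 - 3\<bar>" unfolding H3_def
    by (simp add: abs_mult[symmetric] power2_eq_square power3_eq_cube algebra_simps)
  have "(2::real)^2 \<le> \<bar>z\<bar>^2" using assms by (intro power_mono) auto
  then have z2: "z\<^sup>2 \<ge> 4" by simp
  then have b: "\<bar>z\<^sup>2 - 3\<bar> \<ge> z\<^sup>2 / 4" by simp
  have "\<bar>z\<bar> * (z\<^sup>2/4) \<le> \<bar>H3 z\<bar>" unfolding a using mult_left_mono[OF b, of "\<bar>z\<bar>"] by simp
  moreover have "\<bar>z\<bar>^3 = \<bar>z\<bar> * z\<^sup>2" by (simp add: power2_eq_square power3_eq_cube)
  ultimately show c: "\<bar>z\<bar> ^ 3 \<le> 4 * \<bar>H3 z\<bar>" by simp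
  have "\<bar>z\<bar> * 1 \<le> \<bar>z\<bar> * (z\<^sup>2/4)" using z2 by (intro mult_left_mono) auto
  then show d: "\<bar>z\<bar> \<le> \<bar>H3 z\<bar>" using \<open>\<bar>z\<bar> * (z\<^sup>2/4) \<le> \<bar>H3 z\<bar>\<close> by simp
  have "z\<^sup>2 * 2 \<le> z\<^sup>2 * \<bar>z\<bar>" using assms by (intro mult_left_mono) auto
  then show "z\<^sup>2 \<le> 2 * \<bar>H3 z\<bar>" using \<open>\<bar>z\<bar> * (z\<^sup>2/4) \<le> \<bar>H3 z\<bar>\<close> by (simp add: mult.commute)
  show "1 \<le> \<bar>H3 z\<bar>" using d assms by simp
  show "1 / \<bar>z\<bar> \<le> 1/2" using assms by (simp add: field_simps)
qed

definition Fk :: "(real \<Rightarrow> real) \<Rightarrow> nat \<Rightarrow> real \<Rightarrow> real" where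
  "Fk f k z = kderiv k f (H3 z)"

definition Gp :: "(real \<Rightarrow> real) \<Rightarrow> real \<Rightarrow> real" where
  "Gp f z = (z^2-1)*Fk f 0 z + (3*z^3+3*z)*Fk f 1 z + (9*z^4-63*z^2+162)*Fk f 2 z
     + (270*z-54*z^3)*Fk f 3 z + (-162*z^4+810*z^2-648)*Fk f 4 z"

definition Psi :: "(real \<Rightarrow> real) \<Rightarrow> real \<Rightarrow> real" where
  "Psi f z = std_normal_density z * (let X = H3 z in
            486 * (4 - X\<^sup>2) * kderiv 5 f X - 486 * X * kderiv 4 f X
            - 27 * (8 - X\<^sup>2) * kderiv 3 f X + 99 * X * kderiv 2 f X
            + 6 * kderiv 1 f X - X * f X)"

lemma Psi_Fk: "Psi f z = std_normal_density z * (
            486 * (4 - (H3 z)\<^sup>2) * Fk f 5 z - 486 * H3 z * Fk f 4 z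
            - 27 * (8 - (H3 z)\<^sup>2) * Fk f 3 z + 99 * H3 z * Fk f 2 z
            + 6 * Fk f 1 z - H3 z * Fk f 0 z)"
  unfolding Psi_def Fk_def Let_def by (simp add: kderiv_def)

lemma Fk_deriv:
  assumes D: "\<And>k x. k < 5 \<Longrightarrow> (kderiv k f has_real_derivative kderiv (Suc k) f x) (at x)"
    and k: "k < 5"
  shows "((\<lambda>z. Fk f k z) has_real_derivative Fk f (Suc k) z * (3*z^2-3)) (at z)"
  unfolding Fk_def
  by (rule DERIV_chain2[OF D[OF k] H3_deriv])

lemma Fk_derivs:
  assumes D: "\<And>k x. k < 5 \<Longrightarrow> (kderiv k f has_real_derivative kderiv (Suc k) f x) (at x)"
  shows "((\<lambda>z. Fk f 0 z) has_real_derivative Fk f 1 z * (3*z^2-3)) (at z)"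
    "((\<lambda>z. Fk f 1 z) has_real_derivative Fk f 2 z * (3*z^2-3)) (at z)"
    "((\<lambda>z. Fk f 2 z) has_real_derivative Fk f 3 z * (3*z^2-3)) (at z)"
    "((\<lambda>z. Fk f 3 z) has_real_derivative Fk f 4 z * (3*z^2-3)) (at z)"
    "((\<lambda>z. Fk f 4 z) has_real_derivative Fk f 5 z * (3*z^2-3)) (at z)"
  using Fk_deriv[OF D, of 0 z] Fk_deriv[OF D, of 1 z] Fk_deriv[OF D, of 2 z]
     Fk_deriv[OF D, of 3 z] Fk_deriv[OF D, of 4 z]
  by (simp_all add: eval_nat_numeral)

lemma P_deriv:
  assumes D: "\<And>k x. k < 5 \<Longrightarrow> (kderiv k f has_real_derivative kderiv (Suc k) f x) (at x)"
  shows "((\<lambda>z. Gp f z * std_normal_density z) has_real_derivative Psi f z) (at z)"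
proof -
  note d = Fk_derivs[OF D]
  show ?thesis
    unfolding Gp_def
    apply (auto intro!: derivative_eq_intros d d(2)[unfolded One_nat_def] phi_deriv)
    unfolding Psi_Fk H3_def One_nat_def
    apply algebra
    done
qed

definition Vf :: "(real \<Rightarrow> real) \<Rightarrow> real \<Rightarrow> real" where
  "Vf f t = (Fk f 0 t - Fk f 0 (-t)) * std_normal_density t"

definition Sf :: "(real \<Rightarrow> real) \<Rightarrow> real \<Rightarrow> real" where
  "Sf f z = ((2*z^2-2)*Fk f 0 z + 6*z*Fk f 1 z + (9*z^4-63*z^2+162)*Fk f 2 z
     + (270*z-54*z^3)*Fk f 3 z + (-162*z^4+810*z^2-648)*Fk f 4 z) * std_normal_density z"

definition Pf :: "(real \<Rightarrow> real) \<Rightarrow> real \<Rightarrow> real" where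
  "Pf f z = Gp f z * std_normal_density z"

lemma V_deriv:
  assumes D: "\<And>k x. k < 5 \<Longrightarrow> (kderiv k f has_real_derivative kderiv (Suc k) f x) (at x)"
    and t: "t \<noteq> 0"
  shows "(Vf f has_real_derivative
     ((Pf f t - Pf f (-t)) - Vf f t - (Sf f t - Sf f (-t))) / t) (at t)"
proof -
  have d0: "((\<lambda>t. Fk f 0 t) has_real_derivative Fk f 1 t * (3*t^2-3)) (at t)" for t
    by (rule Fk_derivs(1)[OF D])
  have dm: "((\<lambda>t. Fk f 0 (-t)) has_real_derivative Fk f 1 (-t) * (3*(-t)^2-3) * (-1)) (at t)"
    by (rule DERIV_chain2[OF d0]) (auto intro!: derivative_eq_intros)
  have "(Vf f has_real_derivative
      (Fk f 1 t * (3*t^2-3) - Fk f 1 (-t) * (3*(-t)^2-3) * (-1)) * std_normal_density t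
      + (Fk f 0 t - Fk f 0 (-t)) * (- t * std_normal_density t)) (at t)"
    unfolding Vf_def[abs_def]
    by (rule DERIV_cong[OF DERIV_mult[OF DERIV_diff[OF d0 dm] phi_deriv]]) (simp add: algebra_simps)
  moreover have "t * ((Fk f 1 t * (3*t^2-3) - Fk f 1 (-t) * (3*(-t)^2-3) * (-1)) * std_normal_density t
      + (Fk f 0 t - Fk f 0 (-t)) * (- t * std_normal_density t))
      = (Pf f t - Pf f (-t)) - Vf f t - (Sf f t - Sf f (-t))"
    unfolding Pf_def Gp_def Vf_def Sf_def phi_even by algebra
  ultimately show ?thesis using t
    by (metis (no_types, lifting) nonzero_mult_div_cancel_left)
qed

lemma deriv_measurable:
  fixes g g' :: "real \<Rightarrow> real"
  assumes d: "\<And>x. (g has_real_derivative g' x) (at x)"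
  shows "g' \<in> borel_measurable borel"
proof (rule borel_measurable_LIMSEQ_real)
  let ?u = "\<lambda>n x. (g (x + inverse (real (Suc n))) - g x) / inverse (real (Suc n))"
  show "(\<lambda>n. ?u n x) \<longlonglongrightarrow> g' x" for x
  proof -
    have "((\<lambda>h. (g (x + h) - g x) / h) \<longlongrightarrow> g' x) (at 0)"
      using d[of x] by (simp add: DERIV_def)
    then have "\<forall>X. (\<forall>i. X i \<in> UNIV - {0}) \<longrightarrow> X \<longlonglongrightarrow> 0 \<longrightarrow> (((\<lambda>h. (g (x + h) - g x) / h) \<circ> X) \<longlonglongrightarrow> g' x)"
      by (simp add: tendsto_at_iff_sequentially)
    from this[rule_format, of "\<lambda>n. inverse (real (Suc n))"] LIMSEQ_inverse_real_of_nat
    show ?thesis by (simp add: o_def)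
  qed
  have cg: "continuous_on UNIV g"
    using d by (meson DERIV_isCont continuous_at_imp_continuous_on)
  show "?u n \<in> borel_measurable borel" for n
  proof -
    have "continuous_on UNIV (\<lambda>x. g (x + inverse (real (Suc n))))"
      by (intro continuous_on_compose2[OF cg] continuous_intros) auto
    then have "(\<lambda>x. g (x + inverse (real (Suc n)))) \<in> borel_measurable borel"
      by (rule borel_measurable_continuous_onI)
    moreover have "g \<in> borel_measurable borel" using cg by (rule borel_measurable_continuous_onI)
    ultimately show ?thesis by measurable
  qed
qed

lemma kderiv_measurable:
  assumes D: "\<And>k x. k < 5 \<Longrightarrow> (kderiv k f has_real_derivative kderiv (Suc k) f x) (at x)"
    and k: "k \<le> 5"
  shows "kderiv k f \<in> borel_measurable borel"
proof (cases k)
  case 0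
  have "continuous_on UNIV (kderiv 0 f)"
    using D[of 0] by (meson DERIV_isCont continuous_at_imp_continuous_on zero_less_numeral)
  then show ?thesis using 0 by (simp add: borel_measurable_continuous_onI)
next
  case (Suc j)
  then have "j < 5" using k by simp
  then have "kderiv (Suc j) f \<in> borel_measurable borel" by (rule deriv_measurable[OF D])
  then show ?thesis using Suc by simp
qed

lemma H3_measurable[measurable]: "H3 \<in> borel_measurable borel"
  unfolding H3_def[abs_def] by measurable

lemma Fk_measurable:
  assumes D: "\<And>k x. k < 5 \<Longrightarrow> (kderiv k f has_real_derivative kderiv (Suc k) f x) (at x)"
    and k: "k \<le> 5"
  shows "Fk f k \<in> borel_measurable borel"
proof -
  have "kderiv k f \<in> borel_measurable borel" by (rule kderiv_measurable[OF D k])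
  then have "(\<lambda>z. kderiv k f (H3 z)) \<in> borel_measurable borel" by measurable
  then show ?thesis by (simp add: Fk_def[abs_def])
qed

lemma Fk_cont:
  assumes D: "\<And>k x. k < 5 \<Longrightarrow> (kderiv k f has_real_derivative kderiv (Suc k) f x) (at x)"
    and k: "k < 5"
  shows "continuous_on A (Fk f k)"
proof -
  have "isCont (Fk f k) x" for x
    using Fk_deriv[OF D k, of x] DERIV_isCont by blast
  then show ?thesis by (simp add: continuous_at_imp_continuous_on)
qed

lemma tail_int:
  fixes g h :: "real \<Rightarrow> real"
  assumes g: "integrable lborel g" and h: "h \<in> borel_measurable borel"
    and b: "\<And>z. 2 \<le> \<bar>z\<bar> \<Longrightarrow> \<bar>h z\<bar> \<le> g z"
  shows "set_integrable lborel {2..} h" "set_integrable lborel {2..} (\<lambda>t. h (-t))"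
proof -
  show "set_integrable lborel {2..} h"
    unfolding set_integrable_def
  proof (rule Bochner_Integration.integrable_bound[OF g])
    show "(\<lambda>x. indicat_real {2..} x *\<^sub>R h x) \<in> borel_measurable lborel" using h by simp
    show "AE x in lborel. norm (indicat_real {2..} x *\<^sub>R h x) \<le> norm (g x)"
    proof (rule AE_I2)
      fix x show "norm (indicat_real {2..} x *\<^sub>R h x) \<le> norm (g x)"
        using b[of x] by (auto simp: indicator_def)
    qed
  qed
  have g': "integrable lborel (\<lambda>x. g (0 + (-1) * x))"
    using g by (subst lborel_integrable_real_affine_iff) auto
  show "set_integrable lborel {2..} (\<lambda>t. h (-t))"
    unfolding set_integrable_def
  proof (rule Bochner_Integration.integrable_bound[OF g'])
    show "(\<lambda>x. indicat_real {2..} x *\<^sub>R h (-x)) \<in> borel_measurable lborel" using h by simp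
    show "AE x in lborel. norm (indicat_real {2..} x *\<^sub>R h (-x)) \<le> norm (g (0 + (-1) * x))"
    proof (rule AE_I2)
      fix x show "norm (indicat_real {2..} x *\<^sub>R h (-x)) \<le> norm (g (0 + (-1) * x))"
        using b[of "-x"] by (auto simp: indicator_def)
    qed
  qed
qed

lemma coef_bound:
  fixes c K H X :: real
  assumes "\<bar>c\<bar> \<le> K * \<bar>H\<bar>"
  shows "\<bar>c * X\<bar> \<le> K * \<bar>H * X\<bar>"
proof -
  have "\<bar>c * X\<bar> = \<bar>c\<bar> * \<bar>X\<bar>" by (simp add: abs_mult)
  also have "\<dots> \<le> K * \<bar>H\<bar> * \<bar>X\<bar>" using assms by (intro mult_right_mono) auto
  finally show ?thesis by (simp add: abs_mult)
qed

definition Bnd :: "(real \<Rightarrow> real) \<Rightarrow> real \<Rightarrow> real" where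
  "Bnd f z = \<bar>H3 z * Fk f 0 z * std_normal_density z\<bar> + \<bar>Fk f 1 z * std_normal_density z\<bar>
    + \<bar>H3 z * Fk f 2 z * std_normal_density z\<bar> + \<bar>Fk f 3 z * std_normal_density z\<bar>
    + \<bar>(H3 z)\<^sup>2 * Fk f 3 z * std_normal_density z\<bar> + \<bar>H3 z * Fk f 4 z * std_normal_density z\<bar>"

lemma abs5: "\<bar>a+b+c+d+e\<bar> \<le> \<bar>a\<bar>+\<bar>b\<bar>+\<bar>c\<bar>+\<bar>d\<bar>+\<bar>e\<bar>" for a b c d e :: real
proof -
  have "\<bar>a+b+c+d+e\<bar> \<le> \<bar>a+b+c+d\<bar> + \<bar>e\<bar>" by (rule abs_triangle_ineq)
  also have "\<bar>a+b+c+d\<bar> \<le> \<bar>a+b+c\<bar> + \<bar>d\<bar>" by (rule abs_triangle_ineq)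
  also have "\<bar>a+b+c\<bar> \<le> \<bar>a+b\<bar> + \<bar>c\<bar>" by (rule abs_triangle_ineq)
  also have "\<bar>a+b\<bar> \<le> \<bar>a\<bar> + \<bar>b\<bar>" by (rule abs_triangle_ineq)
  finally show ?thesis by simp
qed

lemma lin5:
  fixes s b0 b1 b2 b3 b4 x0 x1 x2 x3 x4 x5 :: real
  assumes "s \<le> b0+b1+b2+b3+b4" "b0 \<le> 3*x0" "b1 \<le> 6*x1" "b2 \<le> 180*x2" "b3 \<le> 378*x3 + 108*x4"
    "b4 \<le> 1782*x5" "x0 \<ge> 0" "x1 \<ge> 0" "x2 \<ge> 0" "x3 \<ge> 0" "x4 \<ge> 0" "x5 \<ge> 0"
  shows "s \<le> 2000 * (x0+x1+x2+x3+x4+x5)"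
  unfolding distrib_left using assms by linarith

lemma S_bound:
  assumes z: "2 \<le> \<bar>z\<bar>"
  shows "\<bar>Sf f z / z\<bar> \<le> 2000 * Bnd f z"
proof -
  note hb = H3_bounds[OF z]
  let ?H = "H3 z" and ?p = "std_normal_density z"
  have z0: "z \<noteq> 0" using z by auto
  have eq: "Sf f z / z = (2*z - 2/z) * (Fk f 0 z * ?p) + 6 * (Fk f 1 z * ?p)
     + (9*z^3 - 63*z + 162/z) * (Fk f 2 z * ?p) + (270 - 54*z^2) * (Fk f 3 z * ?p)
     + (-162*z^3 + 810*z - 648/z) * (Fk f 4 z * ?p)"
    using z0 unfolding Sf_def by (simp add: field_simps power2_eq_square power3_eq_cube power4_eq_xxxx)
  have iz: "\<bar>1/z\<bar> \<le> 1/2" using hb(5) by simp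
  have az3: "\<bar>z^3\<bar> = \<bar>z\<bar>^3" by (simp add: power_abs)
  have az2: "\<bar>z^2\<bar> = z^2" by simp
  have c0: "\<bar>2*z - 2/z\<bar> \<le> 3 * \<bar>?H\<bar>"
  proof -
    have "\<bar>2*z - 2/z\<bar> \<le> 2*\<bar>z\<bar> + 2*\<bar>1/z\<bar>" by (simp add: abs_triangle_ineq4[of "2*z", THEN order_trans] abs_mult abs_divide)
    then show ?thesis using hb iz by linarith
  qed
  have c2: "\<bar>9*z^3 - 63*z + 162/z\<bar> \<le> 180 * \<bar>?H\<bar>"
  proof -
    have "\<bar>9*z^3 - 63*z + 162/z\<bar> \<le> 9*\<bar>z^3\<bar> + 63*\<bar>z\<bar> + 162*\<bar>1/z\<bar>"
      by (rule order_trans[OF abs_triangle_ineq], rule add_mono, rule order_trans[OF abs_triangle_ineq4])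
         (auto simp: abs_mult abs_divide)
    then show ?thesis using hb iz az3 by linarith
  qed
  have c3: "\<bar>270 - 54*z^2\<bar> \<le> 378 * 1 + 108 * \<bar>?H\<^sup>2\<bar>"
  proof -
    have "\<bar>270 - 54*z^2\<bar> \<le> 270 + 54*z^2"
      by (rule order_trans[OF abs_triangle_ineq4]) (simp add: abs_mult)
    moreover have "\<bar>?H\<bar> \<le> 1 + \<bar>?H\<^sup>2\<bar>"
    proof -
      have "\<bar>?H\<bar> * 1 \<le> \<bar>?H\<bar> * \<bar>?H\<bar>" using hb(4) by (intro mult_left_mono) auto
      then show ?thesis by (simp add: power2_eq_square abs_mult)
    qed
    ultimately show ?thesis using hb by linarith
  qed
  have c4: "\<bar>-162*z^3 + 810*z - 648/z\<bar> \<le> 1782 * \<bar>?H\<bar>"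
  proof -
    have "\<bar>-162*z^3 + 810*z - 648/z\<bar> \<le> 162*\<bar>z^3\<bar> + 810*\<bar>z\<bar> + 648*\<bar>1/z\<bar>"
      by (rule order_trans[OF abs_triangle_ineq4], rule add_mono, rule order_trans[OF abs_triangle_ineq])
         (auto simp: abs_mult abs_divide)
    then show ?thesis using hb iz az3 by linarith
  qed
  have t0: "\<bar>(2*z - 2/z) * (Fk f 0 z * ?p)\<bar> \<le> 3 * \<bar>?H * Fk f 0 z * ?p\<bar>"
    using coef_bound[OF c0] by (simp add: mult.assoc)
  have t2: "\<bar>(9*z^3 - 63*z + 162/z) * (Fk f 2 z * ?p)\<bar> \<le> 180 * \<bar>?H * Fk f 2 z * ?p\<bar>"
    using coef_bound[OF c2] by (simp add: mult.assoc)
  have t4: "\<bar>(-162*z^3 + 810*z - 648/z) * (Fk f 4 z * ?p)\<bar> \<le> 1782 * \<bar>?H * Fk f 4 z * ?p\<bar>"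
    using coef_bound[OF c4] by (simp add: mult.assoc)
  have t3: "\<bar>(270 - 54*z^2) * (Fk f 3 z * ?p)\<bar> \<le> 378 * \<bar>Fk f 3 z * ?p\<bar> + 108 * \<bar>?H\<^sup>2 * Fk f 3 z * ?p\<bar>"
  proof -
    have "\<bar>(270 - 54*z^2) * (Fk f 3 z * ?p)\<bar> = \<bar>270 - 54*z^2\<bar> * \<bar>Fk f 3 z * ?p\<bar>" by (simp add: abs_mult)
    also have "\<dots> \<le> (378 * 1 + 108 * \<bar>?H\<^sup>2\<bar>) * \<bar>Fk f 3 z * ?p\<bar>" using c3 by (intro mult_right_mono) auto
    finally show ?thesis by (simp add: abs_mult algebra_simps)
  qed
  have t1: "\<bar>6 * (Fk f 1 z * ?p)\<bar> = 6 * \<bar>Fk f 1 z * ?p\<bar>" by (simp add: abs_mult)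
  show ?thesis unfolding eq Bnd_def
    by (rule lin5[OF abs5 t0 t1[THEN eq_refl] t2 t3 t4]) simp_all
qed

lemma not_integrable_ge1:
  fixes V :: "real \<Rightarrow> real"
  assumes i: "set_integrable lborel {c..} V" and ge: "\<And>t. t \<ge> c \<Longrightarrow> V t \<ge> 1"
  shows False
proof -
  have "integrable lborel (indicator {c..} :: real \<Rightarrow> real)"
  proof (rule Bochner_Integration.integrable_bound[OF i[unfolded set_integrable_def]])
    show "indicator {c..} \<in> borel_measurable lborel" by simp
    show "AE x in lborel. norm (indicator {c..} x :: real) \<le> norm (indicator {c..} x *\<^sub>R V x)"
    proof (rule AE_I2)
      fix x show "norm (indicator {c..} x :: real) \<le> norm (indicator {c..} x *\<^sub>R V x)"
        using ge[of x] by (auto simp: indicator_def)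
    qed
  qed
  then have fin: "emeasure lborel {c..} < \<infinity>"
    by (simp add: integrable_indicator_iff)
  have le: "ennreal n \<le> emeasure lborel {c..}" if "n \<ge> 0" for n :: real
  proof -
    have "emeasure lborel {c..c+n} \<le> emeasure lborel {c..}"
      by (intro emeasure_mono) auto
    then show ?thesis using that by simp
  qed
  obtain r where r: "emeasure lborel {c..} = ennreal r" "r \<ge> 0"
    using fin by (cases "emeasure lborel {c..}") auto
  have "ennreal (r+1) \<le> ennreal r" using le[of "r+1"] r by simp
  then show False using r by (simp add: ennreal_le_iff)
qed

lemma key_tail_pos:
  fixes Pi V S :: "real \<Rightarrow> real" and a I :: real
  assumes a: "a > 0" and I: "I > 0"
    and lim: "(Pi \<longlongrightarrow> I) at_top"
    and dV: "\<And>t. t \<ge> a \<Longrightarrow> (V has_real_derivative (Pi t - V t - S t) / t) (at t)"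
    and iV: "set_integrable lborel {a..} V"
    and iVt: "set_integrable lborel {a..} (\<lambda>t. V t / t)"
    and iS: "set_integrable lborel {a..} (\<lambda>t. S t / t)"
  shows False
proof -
  define Q where "Q t = V t / t + S t / t" for t
  have iQ: "set_integrable lborel {a..} Q"
    unfolding Q_def using set_integral_add(1)[OF iVt iS] by simp
  define C where "C = (LINT x:{a..}|lborel. \<bar>Q x\<bar>)"
  have "eventually (\<lambda>t. Pi t > I/2) at_top"
    using lim I by (intro order_tendstoD) auto
  then obtain N where N: "\<And>t. t \<ge> N \<Longrightarrow> Pi t > I/2"
    by (auto simp: eventually_at_top_linorder)
  define b where "b = max a N"
  have b: "b \<ge> a" "b > 0" "\<And>t. t \<ge> b \<Longrightarrow> Pi t > I/2"
    using a N unfolding b_def by auto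
  have main: "V T \<ge> V b + (I/2) * (ln T - ln b) - C" if T: "T \<ge> b" for T
  proof -
    have ftc: "((\<lambda>t. (Pi t - V t - S t) / t) has_integral (V T - V b)) {b..T}"
    proof (rule fundamental_theorem_of_calculus[OF T])
      fix x assume "x \<in> {b..T}"
      then have "x \<ge> a" using b by auto
      from dV[OF this] show "(V has_vector_derivative (Pi x - V x - S x) / x) (at x within {b..T})"
        by (simp add: has_real_derivative_iff_has_vector_derivative has_vector_derivative_at_within)
    qed
    have iQb: "set_integrable lborel {b..T} Q"
      by (rule set_integrable_subset[OF iQ]) (use b in auto)
    have hQ: "(Q has_integral (LINT x:{b..T}|lborel. Q x)) {b..T}"
      using set_borel_integral_eq_integral[OF iQb] by (simp add: has_integral_integral)
    have "((\<lambda>t. (Pi t - V t - S t) / t + Q t) has_integral (V T - V b + (LINT x:{b..T}|lborel. Q x))) {b..T}"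
      by (rule has_integral_add[OF ftc hQ])
    then have h1: "((\<lambda>t. Pi t / t) has_integral (V T - V b + (LINT x:{b..T}|lborel. Q x))) {b..T}"
      by (rule has_integral_eq[rotated]) (use b in \<open>auto simp: Q_def field_simps\<close>)
    have h2: "((\<lambda>t. (I/2) * (1/t)) has_integral ((I/2) * ln T - (I/2) * ln b)) {b..T}"
    proof (rule fundamental_theorem_of_calculus[OF T])
      fix x assume "x \<in> {b..T}"
      then have "x > 0" using b by auto
      then show "((\<lambda>t. (I/2) * ln t) has_vector_derivative (I/2) * (1/x)) (at x within {b..T})"
        by (auto intro!: derivative_eq_intros simp: has_real_derivative_iff_has_vector_derivative[symmetric])
    qed
    have le1: "(I/2) * ln T - (I/2) * ln b \<le> V T - V b + (LINT x:{b..T}|lborel. Q x)"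
    proof (rule has_integral_le[OF h2 h1])
      fix x assume "x \<in> {b..T}"
      then have "x > 0" "Pi x > I/2" using b by auto
      then have "I/2 / x \<le> Pi x / x" by (intro divide_right_mono) auto
      then show "(I/2) * (1/x) \<le> Pi x / x" by simp
    qed
    have "(LINT x:{b..T}|lborel. Q x) \<le> (LINT x:{b..T}|lborel. \<bar>Q x\<bar>)"
      by (rule set_integral_mono[OF iQb set_integrable_abs[OF iQb]]) auto
    also have "\<dots> \<le> C"
      unfolding C_def set_lebesgue_integral_def
    proof (rule integral_mono)
      show "integrable lborel (\<lambda>x. indicat_real {b..T} x *\<^sub>R \<bar>Q x\<bar>)"
        using set_integrable_abs[OF iQb] by (simp add: set_integrable_def)
      show "integrable lborel (\<lambda>x. indicat_real {a..} x *\<^sub>R \<bar>Q x\<bar>)"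
        using set_integrable_abs[OF iQ] by (simp add: set_integrable_def)
      fix x show "indicat_real {b..T} x *\<^sub>R \<bar>Q x\<bar> \<le> indicat_real {a..} x *\<^sub>R \<bar>Q x\<bar>"
        using b by (auto simp: indicator_def)
    qed
    finally have "(LINT x:{b..T}|lborel. Q x) \<le> C" .
    moreover have "(I/2) * (ln T - ln b) = (I/2) * ln T - (I/2) * ln b" by (simp add: right_diff_distrib)
    ultimately show ?thesis using le1 by linarith
  qed
  define T1 where "T1 = max b (exp ((2/I) * (1 + \<bar>C\<bar> + \<bar>V b\<bar>) + ln b))"
  have ge1: "V T \<ge> 1" if "T \<ge> T1" for T
  proof -
    have Tb: "T \<ge> b" using that unfolding T1_def by auto
    have "exp ((2/I) * (1 + \<bar>C\<bar> + \<bar>V b\<bar>) + ln b) \<le> T" using that unfolding T1_def by auto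
    then have "(2/I) * (1 + \<bar>C\<bar> + \<bar>V b\<bar>) + ln b \<le> ln T"
      using b Tb by (metis exp_le_cancel_iff exp_ln less_le_trans order_less_le_trans)
    then have "(2/I) * (1 + \<bar>C\<bar> + \<bar>V b\<bar>) \<le> ln T - ln b" by simp
    then have "(I/2) * ((2/I) * (1 + \<bar>C\<bar> + \<bar>V b\<bar>)) \<le> (I/2) * (ln T - ln b)"
      using I by (intro mult_left_mono) auto
    then have "1 + \<bar>C\<bar> + \<bar>V b\<bar> \<le> (I/2) * (ln T - ln b)" using I by simp
    then show ?thesis using main[OF Tb] by linarith
  qed
  have "set_integrable lborel {T1..} V"
    by (rule set_integrable_subset[OF iV]) (use b in \<open>auto simp: T1_def\<close>)
  then show False using ge1 by (rule not_integrable_ge1)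
qed

lemma key_tail:
  fixes Pi V S :: "real \<Rightarrow> real" and a I :: real
  assumes a: "a > 0"
    and lim: "(Pi \<longlongrightarrow> I) at_top"
    and dV: "\<And>t. t \<ge> a \<Longrightarrow> (V has_real_derivative (Pi t - V t - S t) / t) (at t)"
    and iV: "set_integrable lborel {a..} V"
    and iVt: "set_integrable lborel {a..} (\<lambda>t. V t / t)"
    and iS: "set_integrable lborel {a..} (\<lambda>t. S t / t)"
  shows "I = 0"
proof (rule ccontr)
  assume "I \<noteq> 0"
  then consider "I > 0" | "I < 0" by linarith
  then show False
  proof cases
    case 1 then show False using key_tail_pos[OF a 1 lim dV iV iVt iS] by blast
  next
    case 2
    have lim': "((\<lambda>t. - Pi t) \<longlongrightarrow> - I) at_top" by (intro tendsto_intros lim)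
    have dV': "((\<lambda>t. - V t) has_real_derivative ((- Pi t) - (- V t) - (- S t)) / t) (at t)" if "t \<ge> a" for t
    proof (rule DERIV_cong[OF DERIV_minus[OF dV[OF that]]])
      have "t > 0" using that a by simp
      then show "- ((Pi t - V t - S t) / t) = ((- Pi t) - (- V t) - (- S t)) / t"
        by (simp add: field_simps)
    qed
    have iV': "set_integrable lborel {a..} (\<lambda>t. - V t)" using set_integrable_mult_right[of "-1" lborel "{a..}" V] iV by simp
    have iVt': "set_integrable lborel {a..} (\<lambda>t. - V t / t)" using set_integrable_mult_right[of "-1" lborel "{a..}" "\<lambda>t. V t / t"] iVt by simp
    have iS': "set_integrable lborel {a..} (\<lambda>t. - S t / t)" using set_integrable_mult_right[of "-1" lborel "{a..}" "\<lambda>t. S t / t"] iS by simp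
    show False using key_tail_pos[OF a _ lim' dV' iV' iVt' iS'] 2 by simp
  qed
qed

theorem proposition2p3:
  fixes M :: "'a measure" and Z :: "'a \<Rightarrow> real" and f :: "real \<Rightarrow> real"
  assumes "prob_space M"
    and "distributed M lborel Z std_normal_density"
    and "\<And>k x. k < 5 \<Longrightarrow> (kderiv k f has_real_derivative kderiv (Suc k) f x) (at x)"
    and "\<And>i. i \<in> {3, 5} \<Longrightarrow>
           integrable M (\<lambda>\<omega>. (H3 (Z \<omega>))\<^sup>2 * kderiv i f (H3 (Z \<omega>)))"
    and "\<And>j. j \<in> {0, 2, 4} \<Longrightarrow>
           integrable M (\<lambda>\<omega>. H3 (Z \<omega>) * kderiv j f (H3 (Z \<omega>)))"
    and "\<And>k. k \<in> {1, 3, 5} \<Longrightarrow>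
           integrable M (\<lambda>\<omega>. kderiv k f (H3 (Z \<omega>)))"
  shows "(\<integral>\<omega>. (let X = H3 (Z \<omega>) in
            486 * (4 - X\<^sup>2) * kderiv 5 f X - 486 * X * kderiv 4 f X
            - 27 * (8 - X\<^sup>2) * kderiv 3 f X + 99 * X * kderiv 2 f X
            + 6 * kderiv 1 f X - X * f X) \<partial>M) = 0"
proof -
  note D = assms(3)
  note dist = assms(2)
  let ?p = std_normal_density
  have nn: "\<And>x. x \<in> space lborel \<Longrightarrow> 0 \<le> ?p x" by simp
  have km: "kderiv k f \<in> borel_measurable borel" if "k \<le> 5" for k
    using kderiv_measurable[OF D that] .
  have km0[measurable]: "kderiv 0 f \<in> borel_measurable borel" by (rule km) simp
  have km1[measurable]: "kderiv 1 f \<in> borel_measurable borel" by (rule km) simp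
  have km1'[measurable]: "kderiv (Suc 0) f \<in> borel_measurable borel" by (rule km) simp
  have km2[measurable]: "kderiv 2 f \<in> borel_measurable borel" by (rule km) simp
  have km3[measurable]: "kderiv 3 f \<in> borel_measurable borel" by (rule km) simp
  have km4[measurable]: "kderiv 4 f \<in> borel_measurable borel" by (rule km) simp
  have km5[measurable]: "kderiv 5 f \<in> borel_measurable borel" by (rule km) simp
  have f0: "kderiv 0 f = f" by (simp add: kderiv_def)
  have fm[measurable]: "f \<in> borel_measurable borel" using km0 f0 by simp
  have Fm: "Fk f k = (\<lambda>z. kderiv k f (H3 z))" for k by (simp add: Fk_def[abs_def])
  have Fm0[measurable]: "Fk f 0 \<in> borel_measurable borel" unfolding Fm by measurable
  have Fm1[measurable]: "Fk f 1 \<in> borel_measurable borel" unfolding Fm by measurable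
  have Fm2[measurable]: "Fk f 2 \<in> borel_measurable borel" unfolding Fm by measurable
  have Fm3[measurable]: "Fk f 3 \<in> borel_measurable borel" unfolding Fm by measurable
  have Fm4[measurable]: "Fk f 4 \<in> borel_measurable borel" unfolding Fm by measurable
  have Fm5[measurable]: "Fk f 5 \<in> borel_measurable borel" unfolding Fm by measurable
  have tr: "integrable lborel (\<lambda>z. g z * ?p z)" if "integrable M (\<lambda>\<omega>. g (Z \<omega>))" "g \<in> borel_measurable borel" for g
    using distributed_integrable[OF dist _ nn, of g] that by (simp add: mult.commute)
  have a4: "integrable M (\<lambda>\<omega>. (H3 (Z \<omega>))\<^sup>2 * kderiv i f (H3 (Z \<omega>)))" if "i = 3 \<or> i = 5" for i
    using assms(4)[of i] that by blast
  have a5: "integrable M (\<lambda>\<omega>. H3 (Z \<omega>) * kderiv i f (H3 (Z \<omega>)))" if "i = 0 \<or> i = 2 \<or> i = 4" for i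
    using assms(5)[of i] that by blast
  have a6: "integrable M (\<lambda>\<omega>. kderiv i f (H3 (Z \<omega>)))" if "i = 1 \<or> i = 3 \<or> i = 5" for i
    using assms(6)[of i] that by blast
  have B0: "integrable lborel (\<lambda>z. H3 z * Fk f 0 z * ?p z)"
  proof -
    have m: "(\<lambda>z. H3 z * kderiv 0 f (H3 z)) \<in> borel_measurable borel" by measurable
    show ?thesis using tr[OF a5[of 0] m] unfolding Fk_def by simp
  qed
  have B1: "integrable lborel (\<lambda>z. Fk f 1 z * ?p z)"
  proof -
    have m: "(\<lambda>z. kderiv 1 f (H3 z)) \<in> borel_measurable borel" by measurable
    show ?thesis using tr[OF a6[of 1] m] unfolding Fk_def by simp
  qed
  have B2: "integrable lborel (\<lambda>z. H3 z * Fk f 2 z * ?p z)"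
  proof -
    have m: "(\<lambda>z. H3 z * kderiv 2 f (H3 z)) \<in> borel_measurable borel" by measurable
    show ?thesis using tr[OF a5[of 2] m] unfolding Fk_def by simp
  qed
  have B3: "integrable lborel (\<lambda>z. Fk f 3 z * ?p z)"
  proof -
    have m: "(\<lambda>z. kderiv 3 f (H3 z)) \<in> borel_measurable borel" by measurable
    show ?thesis using tr[OF a6[of 3] m] unfolding Fk_def by simp
  qed
  have B3': "integrable lborel (\<lambda>z. (H3 z)\<^sup>2 * Fk f 3 z * ?p z)"
  proof -
    have m: "(\<lambda>z. (H3 z)\<^sup>2 * kderiv 3 f (H3 z)) \<in> borel_measurable borel" by measurable
    show ?thesis using tr[OF a4[of 3] m] unfolding Fk_def by simp
  qed
  have B4: "integrable lborel (\<lambda>z. H3 z * Fk f 4 z * ?p z)"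
  proof -
    have m: "(\<lambda>z. H3 z * kderiv 4 f (H3 z)) \<in> borel_measurable borel" by measurable
    show ?thesis using tr[OF a5[of 4] m] unfolding Fk_def by simp
  qed
  have B5: "integrable lborel (\<lambda>z. Fk f 5 z * ?p z)"
  proof -
    have m: "(\<lambda>z. kderiv 5 f (H3 z)) \<in> borel_measurable borel" by measurable
    show ?thesis using tr[OF a6[of 5] m] unfolding Fk_def by simp
  qed
  have B5': "integrable lborel (\<lambda>z. (H3 z)\<^sup>2 * Fk f 5 z * ?p z)"
  proof -
    have m: "(\<lambda>z. (H3 z)\<^sup>2 * kderiv 5 f (H3 z)) \<in> borel_measurable borel" by measurable
    show ?thesis using tr[OF a4[of 5] m] unfolding Fk_def by simp
  qed
  have iBnd: "integrable lborel (Bnd f)"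
    unfolding Bnd_def[abs_def]
    by (intro Bochner_Integration.integrable_add Bochner_Integration.integrable_abs B0 B1 B2 B3 B3' B4)
  have "integrable lborel (\<lambda>z. 1944 * (Fk f 5 z * ?p z) - 486 * ((H3 z)\<^sup>2 * Fk f 5 z * ?p z)
      - 486 * (H3 z * Fk f 4 z * ?p z) - 216 * (Fk f 3 z * ?p z) + 27 * ((H3 z)\<^sup>2 * Fk f 3 z * ?p z)
      + 99 * (H3 z * Fk f 2 z * ?p z) + 6 * (Fk f 1 z * ?p z) - (H3 z * Fk f 0 z * ?p z))"
    by (intro Bochner_Integration.integrable_add Bochner_Integration.integrable_diff Bochner_Integration.integrable_mult_right B0 B1 B2 B3 B3' B4 B5 B5')
  moreover have "(\<lambda>z. 1944 * (Fk f 5 z * ?p z) - 486 * ((H3 z)\<^sup>2 * Fk f 5 z * ?p z)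
      - 486 * (H3 z * Fk f 4 z * ?p z) - 216 * (Fk f 3 z * ?p z) + 27 * ((H3 z)\<^sup>2 * Fk f 3 z * ?p z)
      + 99 * (H3 z * Fk f 2 z * ?p z) + 6 * (Fk f 1 z * ?p z) - (H3 z * Fk f 0 z * ?p z)) = Psi f"
    by (rule ext) (simp only: Psi_Fk, algebra)
  ultimately have iPsi: "integrable lborel (Psi f)" by simp
  define g where "g z = (let X = H3 z in
            486 * (4 - X\<^sup>2) * kderiv 5 f X - 486 * X * kderiv 4 f X
            - 27 * (8 - X\<^sup>2) * kderiv 3 f X + 99 * X * kderiv 2 f X
            + 6 * kderiv 1 f X - X * f X)" for z
  have gm: "g \<in> borel_measurable lborel" unfolding g_def[abs_def] Let_def by measurable
  have goal_eq: "(\<integral>\<omega>. g (Z \<omega>) \<partial>M) = integral\<^sup>L lborel (Psi f)"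
    using distributed_integral[OF dist gm nn] by (simp add: Psi_def[abs_def] g_def[abs_def])
  define I where "I = integral\<^sup>L lborel (Psi f)"
  define Pi where "Pi t = Pf f t - Pf f (-t)" for t
  have Pi_int: "integral\<^sup>L lborel (\<lambda>z. indicator {-T..T} z *\<^sub>R Psi f z) = Pi T" if T: "T \<ge> 0" for T
  proof -
    have hi: "(Psi f has_integral (Pf f T - Pf f (-T))) {-T..T}"
    proof (rule fundamental_theorem_of_calculus)
      show "-T \<le> T" using T by simp
      fix x
      show "(Pf f has_vector_derivative Psi f x) (at x within {-T..T})"
        using P_deriv[OF D, of x]
        by (simp add: Pf_def[abs_def] has_real_derivative_iff_has_vector_derivative[symmetric]
             has_field_derivative_at_within)
    qed
    have si: "set_integrable lborel {-T..T} (Psi f)"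
      unfolding set_integrable_def by (rule integrable_mult_indicator[OF _ iPsi]) simp
    have "(LINT z:{-T..T}|lborel. Psi f z) = integral {-T..T} (Psi f)"
      by (rule set_borel_integral_eq_integral(2)[OF si])
    also have "\<dots> = Pf f T - Pf f (-T)" using hi by (rule integral_unique)
    finally show ?thesis by (simp add: set_lebesgue_integral_def Pi_def)
  qed
  have lim0: "((\<lambda>T. integral\<^sup>L lborel (\<lambda>z. indicator {-T..T} z *\<^sub>R Psi f z)) \<longlongrightarrow> I) at_top"
    unfolding I_def
  proof (rule integral_dominated_convergence_at_top[where w="\<lambda>z. \<bar>Psi f z\<bar>"])
    show "Psi f \<in> borel_measurable lborel" using iPsi by simp
    show "(\<lambda>z. indicator {-T..T} z *\<^sub>R Psi f z) \<in> borel_measurable lborel" for T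
      using iPsi by simp
    show "integrable lborel (\<lambda>z. \<bar>Psi f z\<bar>)" using iPsi by simp
    show "AE z in lborel. ((\<lambda>T. indicator {-T..T} z *\<^sub>R Psi f z) \<longlongrightarrow> Psi f z) at_top"
    proof (rule AE_I2)
      fix z
      have "eventually (\<lambda>T. indicator {-T..T} z *\<^sub>R Psi f z = Psi f z) at_top"
        using eventually_ge_at_top[of "\<bar>z\<bar>"] by eventually_elim (auto simp: indicator_def)
      then show "((\<lambda>T. indicator {-T..T} z *\<^sub>R Psi f z) \<longlongrightarrow> Psi f z) at_top"
        by (rule tendsto_eventually)
    qed
    show "\<forall>\<^sub>F T in at_top. AE z in lborel. norm (indicator {-T..T} z *\<^sub>R Psi f z) \<le> \<bar>Psi f z\<bar>"
      by (intro always_eventually allI AE_I2) (auto simp: indicator_def)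
  qed
  have lim: "(Pi \<longlongrightarrow> I) at_top"
  proof (rule Lim_transform_eventually[OF lim0])
    show "eventually (\<lambda>T. integral\<^sup>L lborel (\<lambda>z. indicator {-T..T} z *\<^sub>R Psi f z) = Pi T) at_top"
      using eventually_ge_at_top[of 0] by eventually_elim (rule Pi_int)
  qed
  define hV where "hV z = Fk f 0 z * ?p z" for z
  define hVt where "hVt z = Fk f 0 z * ?p z / z" for z
  define hS where "hS z = Sf f z / z" for z
  have hVm: "hV \<in> borel_measurable borel" unfolding hV_def[abs_def] by measurable
  have hVtm: "hVt \<in> borel_measurable borel" unfolding hVt_def[abs_def] by measurable
  have hSm: "hS \<in> borel_measurable borel" unfolding hS_def[abs_def] Sf_def[abs_def] by measurable
  have bV: "\<bar>hV z\<bar> \<le> Bnd f z" if z: "2 \<le> \<bar>z\<bar>" for z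
  proof -
    have "\<bar>hV z\<bar> = 1 * \<bar>Fk f 0 z * ?p z\<bar>" by (simp add: hV_def)
    also have "\<dots> \<le> \<bar>H3 z\<bar> * \<bar>Fk f 0 z * ?p z\<bar>" using H3_bounds(4)[OF z] by (intro mult_right_mono) auto
    also have "\<dots> = \<bar>H3 z * Fk f 0 z * ?p z\<bar>" by (simp add: abs_mult)
    also have "\<dots> \<le> Bnd f z" unfolding Bnd_def by simp
    finally show ?thesis .
  qed
  have bVt: "\<bar>hVt z\<bar> \<le> Bnd f z" if z: "2 \<le> \<bar>z\<bar>" for z
  proof -
    have "\<bar>hVt z\<bar> = \<bar>hV z\<bar> / \<bar>z\<bar>" by (simp add: hVt_def hV_def abs_divide)
    also have "\<dots> \<le> \<bar>hV z\<bar> / 1" using z by (intro divide_left_mono) auto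
    finally show ?thesis using bV[OF z] by simp
  qed
  have bS: "\<bar>hS z\<bar> \<le> 2000 * Bnd f z" if z: "2 \<le> \<bar>z\<bar>" for z
    using S_bound[OF z] by (simp add: hS_def)
  have i2000: "integrable lborel (\<lambda>z. 2000 * Bnd f z)" using iBnd by simp
  have iV: "set_integrable lborel {2..} (Vf f)"
  proof -
    have "set_integrable lborel {2..} (\<lambda>t. hV t - hV (-t))"
      using tail_int[OF iBnd hVm bV] by (intro set_integral_diff(1))
    moreover have "(\<lambda>t. hV t - hV (-t)) = Vf f" by (rule ext) (simp add: hV_def Vf_def phi_even algebra_simps)
    ultimately show ?thesis by simp
  qed
  have iVt: "set_integrable lborel {2..} (\<lambda>t. Vf f t / t)"
  proof -
    have "set_integrable lborel {2..} (\<lambda>t. hVt t + hVt (-t))"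
      using tail_int[OF iBnd hVtm bVt] by (intro set_integral_add(1))
    moreover have "(\<lambda>t. hVt t + hVt (-t)) = (\<lambda>t. Vf f t / t)"
      by (rule ext) (simp add: hVt_def Vf_def phi_even diff_divide_distrib left_diff_distrib)
    ultimately show ?thesis by simp
  qed
  have iS: "set_integrable lborel {2..} (\<lambda>t. (Sf f t - Sf f (-t)) / t)"
  proof -
    have "set_integrable lborel {2..} (\<lambda>t. hS t + hS (-t))"
      using tail_int[OF i2000 hSm bS] by (intro set_integral_add(1))
    moreover have "(\<lambda>t. hS t + hS (-t)) = (\<lambda>t. (Sf f t - Sf f (-t)) / t)"
      by (rule ext) (simp add: hS_def diff_divide_distrib)
    ultimately show ?thesis by simp
  qed
  have dV: "(Vf f has_real_derivative (Pi t - Vf f t - (Sf f t - Sf f (-t))) / t) (at t)" if "t \<ge> 2" for t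
    using V_deriv[OF D, of t] that by (simp add: Pi_def)
  have "I = 0"
    by (rule key_tail[where a=2 and V="Vf f" and S="\<lambda>t. Sf f t - Sf f (-t)", OF _ lim dV iV iVt iS]) simp
  then show ?thesis using goal_eq unfolding g_def I_def by simp
qed

end
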